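(* Let $K\ge 2$ and $M,N,d$ be positive integers. If $d\le\min(M,N-1)$ (in particular $N\ge 2$), then the symmetric system $(M\times N,d)^K$ is proper if and only if the symmetric system $((M+1)\times(N-1),d)^K$ is proper (equivalently, one is improper iff the other is). Similarly, if $d\le\min(M-1,N)$, then $(M\times N,d)^K$ is proper if and only if $((M-1)\times(N+1),d)^K$ is proper.
   Context: A $K$-user MIMO interference system $\Pi_{k=1}^K(M^{[k]}\times N^{[k]},d^{[k]})$ is specified by positive integers $M^{[k]}$, $N^{[k]}$ and $d^{[k]}\le\min(M^{[k]},N^{[k]})$, $k\in\mathcal{K}=\{1,\dots,K\}$; the symmetric system $(M\times N,d)^K$ has $M^{[k]}=M$, $N^{[k]}=N$, $d^{[k]}=d$ for all $k$. Its variables are: for each $j\in\mathcal K$ and $n\in\{1,\dots,d^{[j]}\}$ a set $T_{j,n}$ of $M^{[j]}-d^{[j]}$ variables, and for each $k\in\mathcal K$, $m\in\{1,\dots,d^{[k]}\}$ a set $R_{k,m}$ of $N^{[k]}-d^{[k]}$ variables, all pairwise disjoint. The equations are $E^{kj}_{mn}$ for $j,k\in\mathcal K$, $k\ne j$, $m\le d^{[k]}$, $n\le d^{[j]}$, forming the set $\mathcal E$, with $\mathrm{var}(E^{kj}_{mn})=T_{j,n}\cup R_{k,m}$. The system is proper if for every $S\subseteq\mathcal E$, $|S|\le\left|\bigcup_{E\in S}\mathrm{var}(E)\right|$, and improper otherwise. *)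

theory Defs
  imports Main
begin

text \<open>TV j n i : the i-th variable of the set T_{j,n} (i < M^{[j]} - d^{[j]});
  RV k m i : the i-th variable of the set R_{k,m} (i < N^{[k]} - d^{[k]}).
  Distinct constructors/arguments make all sets pairwise disjoint.\<close>
datatype mimo_var = TV nat nat nat | RV nat nat nat

text \<open>Users are indexed by {1..K}; streams by {1..d^{[k]}}.
  The equation E^{kj}_{mn} is represented by the tuple (k, j, m, n).\<close>
definition mimo_eqs :: "nat \<Rightarrow> (nat \<Rightarrow> nat) \<Rightarrow> (nat \<times> nat \<times> nat \<times> nat) set" where
  "mimo_eqs K d = {(k, j, m, n). k \<in> {1..K} \<and> j \<in> {1..K} \<and> k \<noteq> j
                     \<and> m \<in> {1..d k} \<and> n \<in> {1..d j}}"

definition T_set :: "(nat \<Rightarrow> nat) \<Rightarrow> (nat \<Rightarrow> nat) \<Rightarrow> nat \<Rightarrow> nat \<Rightarrow> mimo_var set" where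
  "T_set M d j n = {TV j n i | i. i < M j - d j}"

definition R_set :: "(nat \<Rightarrow> nat) \<Rightarrow> (nat \<Rightarrow> nat) \<Rightarrow> nat \<Rightarrow> nat \<Rightarrow> mimo_var set" where
  "R_set N d k m = {RV k m i | i. i < N k - d k}"

definition eq_vars :: "(nat \<Rightarrow> nat) \<Rightarrow> (nat \<Rightarrow> nat) \<Rightarrow> (nat \<Rightarrow> nat)
    \<Rightarrow> nat \<times> nat \<times> nat \<times> nat \<Rightarrow> mimo_var set" where
  "eq_vars M N d E = (case E of (k, j, m, n) \<Rightarrow> T_set M d j n \<union> R_set N d k m)"

definition mimo_proper :: "nat \<Rightarrow> (nat \<Rightarrow> nat) \<Rightarrow> (nat \<Rightarrow> nat) \<Rightarrow> (nat \<Rightarrow> nat) \<Rightarrow> bool" where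
  "mimo_proper K M N d =
     (\<forall>S \<subseteq> mimo_eqs K d. card S \<le> card (\<Union>E\<in>S. eq_vars M N d E))"

definition sym_proper :: "nat \<Rightarrow> nat \<Rightarrow> nat \<Rightarrow> nat \<Rightarrow> bool" where
  "sym_proper K M N d = mimo_proper K (\<lambda>_. M) (\<lambda>_. N) (\<lambda>_. d)"

end

theory Submission
  imports Defs
begin

lemma arith_key:
  fixes a b c t r D :: nat
  assumes "c \<le> a * D" "c \<le> b * D" "D \<le> t + r" "D > 0"
  shows "c \<le> t * a + r * b"
proof -
  define t0 where "t0 = min t D"
  define r0 where "r0 = D - t0"
  have r0: "r0 \<le> r" using assms(3) unfolding r0_def t0_def by auto
  have "D * c = t0 * c + r0 * c" unfolding r0_def t0_def
    by (simp add: add_mult_distrib[symmetric])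
  also have "\<dots> \<le> t0 * (a * D) + r0 * (b * D)"
    using assms(1,2) by (intro add_mono mult_le_mono2)
  also have "\<dots> = D * (t0 * a + r0 * b)" by (simp add: algebra_simps)
  finally have "c \<le> t0 * a + r0 * b" using assms(4) by simp
  also have "\<dots> \<le> t * a + r * b"
    using r0 by (intro add_mono mult_le_mono1) (auto simp: t0_def)
  finally show ?thesis .
qed

lemma eqs_finite: "finite (mimo_eqs K (\<lambda>_. d))"
proof -
  have "mimo_eqs K (\<lambda>_. d) \<subseteq> {1..K} \<times> {1..K} \<times> {1..d} \<times> {1..d}"
    unfolding mimo_eqs_def by auto
  then show ?thesis by (rule finite_subset) auto
qed

lemma suff:
  fixes K M N d :: nat
  assumes K: "K \<ge> 2" and dpos: "d > 0" and dM: "d \<le> M" and dN: "d \<le> N"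
    and main: "(K - 1) * d \<le> (M - d) + (N - d)"
  shows "sym_proper K M N d"
  unfolding sym_proper_def mimo_proper_def
proof (intro allI impI)
  fix S assume S: "S \<subseteq> mimo_eqs K (\<lambda>_. d)"
  have finS: "finite S" using S eqs_finite finite_subset by blast
  define t where "t = M - d"
  define r where "r = N - d"
  define D where "D = (K - 1) * d"
  define A where "A = (\<lambda>(k,j,m,n). (j,n)) ` S"
  define B where "B = (\<lambda>(k,j,m,n). (k,m)) ` S"
  have finA: "finite A" and finB: "finite B" using finS unfolding A_def B_def by auto
  define U where "U = (\<Union>E\<in>S. eq_vars (\<lambda>_. M) (\<lambda>_. N) (\<lambda>_. d) E)"
  have finU: "finite U" unfolding U_def eq_vars_def T_set_def R_set_def using finS
    by (auto split: prod.splits)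
  define TT where "TT = (\<lambda>((j,n),i). TV j n i) ` (A \<times> {..<t})"
  define RR where "RR = (\<lambda>((k,m),i). RV k m i) ` (B \<times> {..<r})"
  have sub: "TT \<union> RR \<subseteq> U"
  proof
    fix x assume "x \<in> TT \<union> RR"
    then show "x \<in> U"
    proof
      assume "x \<in> TT"
      then obtain k j m n i where "(k,j,m,n) \<in> S" "i < t" "x = TV j n i"
        unfolding TT_def A_def by auto
      then show ?thesis unfolding U_def eq_vars_def T_set_def t_def by force
    next
      assume "x \<in> RR"
      then obtain k j m n i where "(k,j,m,n) \<in> S" "i < r" "x = RV k m i"
        unfolding RR_def B_def by auto
      then show ?thesis unfolding U_def eq_vars_def R_set_def r_def by force
    qed
  qed
  have cTT: "card TT = card A * t" unfolding TT_def
    by (subst card_image) (auto simp: inj_on_def finA card_cartesian_product)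
  have cRR: "card RR = card B * r" unfolding RR_def
    by (subst card_image) (auto simp: inj_on_def finB card_cartesian_product)
  have disj: "TT \<inter> RR = {}" unfolding TT_def RR_def by auto
  have "card (TT \<union> RR) = card A * t + card B * r"
    using card_Un_disjoint[of TT RR] disj cTT cRR finA finB
    unfolding TT_def RR_def by auto
  then have cU: "card A * t + card B * r \<le> card U"
    using card_mono[OF finU sub] by simp
  have cardG: "card (({1..K} - {j}) \<times> {1..d}) = D" if "j \<in> {1..K}" for j
    using that by (simp add: card_cartesian_product D_def)
  have SA: "card S \<le> card A * D"
  proof -
    define G where "G = (\<lambda>(j::nat,n::nat). ({1..K} - {j}) \<times> {1..d})"
    have "S \<subseteq> (\<lambda>((j,n),(k,m)). (k,j,m,n)) ` (Sigma A G)"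
    proof
      fix e assume e: "e \<in> S"
      obtain k j m n where ee: "e = (k,j,m,n)" by (cases e) auto
      have "(k,j,m,n) \<in> mimo_eqs K (\<lambda>_. d)" using S e ee by auto
      then have "((j,n),(k,m)) \<in> Sigma A G"
        using e ee unfolding G_def A_def mimo_eqs_def by force
      then show "e \<in> (\<lambda>((j,n),(k,m)). (k,j,m,n)) ` (Sigma A G)" using ee by force
    qed
    moreover have finSig: "finite (Sigma A G)" using finA unfolding G_def by auto
    ultimately have "card S \<le> card ((\<lambda>((j,n),(k,m)). (k,j,m,n)) ` (Sigma A G))"
      by (intro card_mono) auto
    also have "\<dots> \<le> card (Sigma A G)" by (rule card_image_le[OF finSig])
    finally have "card S \<le> card (Sigma A G)" .
    also have "card (Sigma A G) = (\<Sum>p\<in>A. card (G p))"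
      by (rule card_SigmaI) (auto simp: finA G_def)
    also have "\<dots> = (\<Sum>p\<in>A. D)"
    proof (rule sum.cong)
      fix p assume "p \<in> A"
      then obtain k j m n where "(k,j,m,n) \<in> S" "p = (j,n)" unfolding A_def by auto
      then have "j \<in> {1..K}" using S unfolding mimo_eqs_def by auto
      then show "card (G p) = D" using cardG \<open>p = (j,n)\<close> unfolding G_def by simp
    qed simp
    finally show ?thesis by simp
  qed
  have SB: "card S \<le> card B * D"
  proof -
    define G where "G = (\<lambda>(k::nat,m::nat). ({1..K} - {k}) \<times> {1..d})"
    have "S \<subseteq> (\<lambda>((k,m),(j,n)). (k,j,m,n)) ` (Sigma B G)"
    proof
      fix e assume e: "e \<in> S"
      obtain k j m n where ee: "e = (k,j,m,n)" by (cases e) auto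
      have "(k,j,m,n) \<in> mimo_eqs K (\<lambda>_. d)" using S e ee by auto
      then have "((k,m),(j,n)) \<in> Sigma B G"
        using e ee unfolding G_def B_def mimo_eqs_def by force
      then show "e \<in> (\<lambda>((k,m),(j,n)). (k,j,m,n)) ` (Sigma B G)" using ee by force
    qed
    moreover have finSig: "finite (Sigma B G)" using finB unfolding G_def by auto
    ultimately have "card S \<le> card ((\<lambda>((k,m),(j,n)). (k,j,m,n)) ` (Sigma B G))"
      by (intro card_mono) auto
    also have "\<dots> \<le> card (Sigma B G)" by (rule card_image_le[OF finSig])
    finally have "card S \<le> card (Sigma B G)" .
    also have "card (Sigma B G) = (\<Sum>p\<in>B. card (G p))"
      by (rule card_SigmaI) (auto simp: finB G_def)
    also have "\<dots> = (\<Sum>p\<in>B. D)"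
    proof (rule sum.cong)
      fix p assume "p \<in> B"
      then obtain k j m n where "(k,j,m,n) \<in> S" "p = (k,m)" unfolding B_def by auto
      then have "k \<in> {1..K}" using S unfolding mimo_eqs_def by auto
      then show "card (G p) = D" using cardG \<open>p = (k,m)\<close> unfolding G_def by simp
    qed simp
    finally show ?thesis by simp
  qed
  have Dpos: "D > 0" using K dpos unfolding D_def by simp
  have "card S \<le> t * card A + r * card B"
    using arith_key[OF SA SB _ Dpos] main unfolding D_def t_def r_def by simp
  then show "card S \<le> card U" using cU by (simp add: mult.commute)
qed

lemma nec:
  fixes K M N d :: nat
  assumes K: "K \<ge> 2" and dpos: "d > 0" and P: "sym_proper K M N d"
  shows "(K - 1) * d \<le> (M - d) + (N - d)"
proof -
  define S where "S = mimo_eqs K (\<lambda>_. d)"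
  define t where "t = M - d"
  define r where "r = N - d"
  define Off where "Off = Sigma {1..K} (\<lambda>k. {1..K} - {k})"
  have cOff: "card Off = K * (K - 1)"
    unfolding Off_def by (subst card_SigmaI) auto
  have Seq: "S = (\<lambda>((k,j),(m,n)). (k,j,m,n)) ` (Off \<times> ({1..d} \<times> {1..d}))"
    unfolding S_def Off_def mimo_eqs_def by (auto simp: image_iff)
  have cS: "card S = K * (K - 1) * (d * d)"
    unfolding Seq by (subst card_image) (auto simp: inj_on_def card_cartesian_product cOff)
  define U where "U = (\<Union>E\<in>S. eq_vars (\<lambda>_. M) (\<lambda>_. N) (\<lambda>_. d) E)"
  have le: "card S \<le> card U" using P unfolding sym_proper_def mimo_proper_def S_def U_def by auto
  define TT where "TT = (\<lambda>((j,n),i). TV j n i) ` (({1..K} \<times> {1..d}) \<times> {..<t})"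
  define RR where "RR = (\<lambda>((k,m),i). RV k m i) ` (({1..K} \<times> {1..d}) \<times> {..<r})"
  have sub: "U \<subseteq> TT \<union> RR"
  proof
    fix x assume "x \<in> U"
    then obtain k j m n where e: "(k,j,m,n) \<in> S"
      and x: "x \<in> T_set (\<lambda>_. M) (\<lambda>_. d) j n \<union> R_set (\<lambda>_. N) (\<lambda>_. d) k m"
      unfolding U_def eq_vars_def by auto
    have kj: "k \<in> {1..K}" "j \<in> {1..K}" "m \<in> {1..d}" "n \<in> {1..d}"
      using e unfolding S_def mimo_eqs_def by auto
    show "x \<in> TT \<union> RR"
      using x
    proof
      assume "x \<in> T_set (\<lambda>_. M) (\<lambda>_. d) j n"
      then obtain i where "x = TV j n i" "i < t" unfolding T_set_def t_def by auto
      then have "x = (\<lambda>((j,n),i). TV j n i) ((j,n),i)" "((j,n),i) \<in> ({1..K} \<times> {1..d}) \<times> {..<t}"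
        using kj by auto
      then show ?thesis unfolding TT_def by blast
    next
      assume "x \<in> R_set (\<lambda>_. N) (\<lambda>_. d) k m"
      then obtain i where "x = RV k m i" "i < r" unfolding R_set_def r_def by auto
      then have "x = (\<lambda>((k,m),i). RV k m i) ((k,m),i)" "((k,m),i) \<in> ({1..K} \<times> {1..d}) \<times> {..<r}"
        using kj by auto
      then show ?thesis unfolding RR_def by blast
    qed
  qed
  have finTR: "finite (TT \<union> RR)" unfolding TT_def RR_def by simp
  have "card U \<le> card (TT \<union> RR)" by (rule card_mono[OF finTR sub])
  also have "\<dots> \<le> card TT + card RR" by (rule card_Un_le)
  finally have cU0: "card U \<le> card TT + card RR" .
  have cTT: "card TT \<le> K * d * t" unfolding TT_def
    using card_image_le[of "({1..K} \<times> {1..d}) \<times> {..<t}" "\<lambda>((j,n),i). TV j n i"]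
    by (simp add: card_cartesian_product)
  have cRR: "card RR \<le> K * d * r" unfolding RR_def
    using card_image_le[of "({1..K} \<times> {1..d}) \<times> {..<r}" "\<lambda>((k,m),i). RV k m i"]
    by (simp add: card_cartesian_product)
  have cU: "card U \<le> K * d * t + K * d * r" using cU0 cTT cRR by linarith
  have "(K * d) * ((K - 1) * d) = card S" using cS by (simp add: ac_simps)
  also have "\<dots> \<le> K * d * t + K * d * r" using le cU by (rule le_trans)
  also have "\<dots> = (K * d) * (t + r)" by (rule add_mult_distrib2[symmetric])
  finally have "(K * d) * ((K - 1) * d) \<le> (K * d) * (t + r)" .
  moreover have "K * d > 0" using K dpos by simp
  ultimately show ?thesis unfolding t_def r_def by simp
qed

lemma char:
  fixes K M N d :: nat
  assumes "K \<ge> 2" "d > 0" "d \<le> M" "d \<le> N"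
  shows "sym_proper K M N d \<longleftrightarrow> (K - 1) * d \<le> (M - d) + (N - d)"
proof
  assume "sym_proper K M N d"
  then show "(K - 1) * d \<le> (M - d) + (N - d)" by (rule nec[OF assms(1,2)])
next
  assume "(K - 1) * d \<le> (M - d) + (N - d)"
  then show "sym_proper K M N d" by (rule suff[OF assms])
qed

theorem corollary2:
  fixes K M N d :: nat
  assumes "K \<ge> 2" and "M > 0" and "N > 0" and "d > 0"
  shows "(d \<le> min M (N - 1) \<longrightarrow>
            (sym_proper K M N d \<longleftrightarrow> sym_proper K (M + 1) (N - 1) d))
       \<and> (d \<le> min (M - 1) N \<longrightarrow>
            (sym_proper K M N d \<longleftrightarrow> sym_proper K (M - 1) (N + 1) d))"
proof (intro conjI impI)
  assume h: "d \<le> min M (N - 1)"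
  have h1: "d \<le> M" "d \<le> N - 1" using h by simp_all
  have h2: "d \<le> N" "d \<le> M + 1" using h1 by linarith+
  obtain a where a: "M = d + a" using h1(1) le_Suc_ex by blast
  obtain b where b: "N - 1 = d + b" using h1(2) le_Suc_ex by blast
  have bN: "N = Suc (d + b)" using b h2(1) assms(4) by simp
  have e: "(M + 1 - d) + (N - 1 - d) = (M - d) + (N - d)" unfolding a bN by simp
  have c1: "sym_proper K M N d \<longleftrightarrow> (K - 1) * d \<le> (M - d) + (N - d)"
    by (rule char) (use assms h1 h2 in auto)
  have c2: "sym_proper K (M + 1) (N - 1) d \<longleftrightarrow> (K - 1) * d \<le> (M + 1 - d) + (N - 1 - d)"
    by (rule char) (use assms h1 h2 in auto)
  show "sym_proper K M N d \<longleftrightarrow> sym_proper K (M + 1) (N - 1) d"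
    unfolding c1 c2 e ..
next
  assume h: "d \<le> min (M - 1) N"
  have h1: "d \<le> M - 1" "d \<le> N" using h by simp_all
  have h2: "d \<le> M" "d \<le> N + 1" using h1 by linarith+
  obtain a where a: "M - 1 = d + a" using h1(1) le_Suc_ex by blast
  obtain b where b: "N = d + b" using h1(2) le_Suc_ex by blast
  have aM: "M = Suc (d + a)" using a h2(1) assms(4) by simp
  have e: "(M - 1 - d) + (N + 1 - d) = (M - d) + (N - d)" unfolding aM b by simp
  have c1: "sym_proper K M N d \<longleftrightarrow> (K - 1) * d \<le> (M - d) + (N - d)"
    by (rule char) (use assms h1 h2 in auto)
  have c2: "sym_proper K (M - 1) (N + 1) d \<longleftrightarrow> (K - 1) * d \<le> (M - 1 - d) + (N + 1 - d)"
    by (rule char) (use assms h1 h2 in auto)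
  show "sym_proper K M N d \<longleftrightarrow> sym_proper K (M - 1) (N + 1) d"
    unfolding c1 c2 e ..
qed

end
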